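(* Let $\mu$ be a positive Radon measure on $\mathbb R^n$ with power growth of exponent $0<\alpha\le n$. Let $I$ be a dyadic cube and $x\in I$. Then $$\int_I\frac{1}{|t-x|^{\alpha-1}}\,d\mu(t)\lesssim\ell(I)\,\rho_{\rm in}(I),$$ with implicit constant depending only on $n$ and $\alpha$.
   Context: $\mu$ has power growth of exponent $\alpha$ if $\mu(I)\lesssim\ell(I)^\alpha$ for every cube $I=\prod_{i=1}^n[a_i,a_i+l)$ ($\ell(I)=l$). Dyadic cubes are $\prod_{i=1}^n2^{-m}[j_i,j_i+1)$, $j_i,m\in\mathbb Z$. $\rho_{\rm in}(I)=\sup_{t\in I,\,0<\lambda<\ell(I)}\mu(I\cap B(t,\lambda))/\lambda^\alpha$, where $B(t,\lambda)$ is the open Euclidean ball of center $t$ and radius $\lambda$. *)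

theory Defs
  imports "HOL-Analysis.Analysis"
begin

definition cube :: "real ^ 'n \<Rightarrow> real \<Rightarrow> (real ^ 'n) set" where
  "cube a l = {y. \<forall>i. a $ i \<le> y $ i \<and> y $ i < a $ i + l}"

definition dyadic_cube :: "int \<Rightarrow> ('n \<Rightarrow> int) \<Rightarrow> (real ^ 'n) set" where
  "dyadic_cube m j = cube (\<chi> i. real_of_int (j i) * 2 powr (- real_of_int m)) (2 powr (- real_of_int m))"

text \<open>Positive Radon measure on R^n: a Borel measure, finite on compact sets
  (on R^n locally finite Borel measures are exactly the Radon measures).\<close>
definition radon_measure :: "(real ^ 'n) measure \<Rightarrow> bool" where
  "radon_measure M \<longleftrightarrow> sets M = sets borel \<and> (\<forall>K. compact K \<longrightarrow> emeasure M K < \<infinity>)"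

definition power_growth :: "(real ^ 'n) measure \<Rightarrow> real \<Rightarrow> bool" where
  "power_growth M \<alpha> \<longleftrightarrow> (\<exists>K. \<forall>a l. l > 0 \<longrightarrow> emeasure M (cube a l) \<le> ennreal (K * l powr \<alpha>))"

text \<open>rho_in(I) for a cube I of side length l.\<close>
definition rho_in :: "(real ^ 'n) measure \<Rightarrow> real \<Rightarrow> (real ^ 'n) set \<Rightarrow> real \<Rightarrow> real" where
  "rho_in M \<alpha> I l = Sup {measure M (I \<inter> ball t r) / r powr \<alpha> | t r. t \<in> I \<and> 0 < r \<and> r < l}"

end

theory Submission
  imports Defs
begin


lemma cube_borel: fixes a :: "real^'n" shows "cube a l \<in> sets borel"
proof -
  have "cube a l = (\<Inter>i\<in>UNIV. {y. a $ i \<le> y $ i} \<inter> {y. y $ i < a $ i + l})" by (auto simp: cube_def)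
  moreover have "(\<Inter>i\<in>UNIV. {y::real^'n. a $ i \<le> y $ i} \<inter> {y. y $ i < a $ i + l}) \<in> sets borel"
    by (intro sets.finite_INT sets.Int borel_closed borel_open closed_halfspace_component_ge_cart open_halfspace_component_lt_cart) auto
  ultimately show ?thesis by simp
qed

lemma ball_sub_cube: "ball t r \<subseteq> cube (t - (\<chi> i. r)) (2*r)"
proof
  fix y assume "y \<in> ball t r"
  then have "norm (y - t) < r" by (simp add: dist_norm norm_minus_commute)
  then have "\<bar>(y - t) $ i\<bar> < r" for i using component_le_norm_cart[of "y-t" i] by linarith
  then have "(t - (\<chi> i. r)) $ i \<le> y $ i \<and> y $ i < (t - (\<chi> i. r)) $ i + 2*r" for i
    using abs_less_iff[of "y $ i - t $ i" r] by simp
  then show "y \<in> cube (t - (\<chi> i. r)) (2*r)" unfolding cube_def by blast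
qed

lemma pg_K:
  assumes "power_growth M \<alpha>"
  obtains K where "K \<ge> 0" "\<And>a l. l > 0 \<Longrightarrow> emeasure M (cube a l) \<le> ennreal (K * l powr \<alpha>)"
proof -
  obtain K where K: "\<And>a l. l > 0 \<Longrightarrow> emeasure M (cube a l) \<le> ennreal (K * l powr \<alpha>)"
    using assms unfolding power_growth_def by blast
  have "emeasure M (cube a l) \<le> ennreal (max 0 K * l powr \<alpha>)" if "l > 0" for a l
  proof -
    have "ennreal (K * l powr \<alpha>) \<le> ennreal (max 0 K * l powr \<alpha>)"
      by (intro ennreal_leI mult_right_mono) auto
    then show ?thesis using K[OF that] by (rule order_trans[rotated])
  qed
  then show ?thesis using that[of "max 0 K"] by auto
qed

lemma sets_M: "radon_measure M \<Longrightarrow> sets M = sets borel"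
  by (simp add: radon_measure_def)

lemma rho_facts:
  fixes M :: "(real^'n) measure"
  assumes rm: "radon_measure M" and pg: "power_growth M \<alpha>" and l: "l > 0"
  shows "\<And>t r. t \<in> cube a l \<Longrightarrow> 0 < r \<Longrightarrow> r < l \<Longrightarrow>
           emeasure M (cube a l \<inter> ball t r) \<le> ennreal (rho_in M \<alpha> (cube a l) l * r powr \<alpha>)"
    and "rho_in M \<alpha> (cube a l) l \<ge> 0"
proof -
  obtain K where K0: "K \<ge> 0" and K: "\<And>a l. l > 0 \<Longrightarrow> emeasure M (cube a l) \<le> ennreal (K * l powr \<alpha>)"
    using pg_K[OF pg] by blast
  have sM: "sets M = sets borel" using sets_M[OF rm] .
  have Isets: "cube a l \<inter> ball t r \<in> sets M" for t r
    using cube_borel[of a l] by (simp add: sM)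
  define S where "S = {measure M (cube a l \<inter> ball t r) / r powr \<alpha> | t r. t \<in> cube a l \<and> 0 < r \<and> r < l}"
  have rho: "rho_in M \<alpha> (cube a l) l = Sup S" by (simp add: rho_in_def S_def)
  have mle: "measure M (cube a l \<inter> ball t r) \<le> K * 2 powr \<alpha> * r powr \<alpha>" if r: "r > 0" for t r
  proof -
    let ?C = "cube (t - (\<chi> i. r)) (2*r)"
    have e: "emeasure M ?C \<le> ennreal (K * (2*r) powr \<alpha>)" using K[of "2*r"] r by simp
    have fm: "?C \<in> fmeasurable M"
      using e cube_borel[of "t - (\<chi> i. r)" "2*r"] by (intro fmeasurableI) (auto simp: sM intro: le_less_trans)
    have "measure M (cube a l \<inter> ball t r) \<le> measure M ?C"
      by (rule measure_mono_fmeasurable[OF _ Isets fm]) (use ball_sub_cube[of t r] in blast)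
    also have "\<dots> = enn2real (emeasure M ?C)" by (simp add: measure_def)
    also have "\<dots> \<le> enn2real (ennreal (K * (2*r) powr \<alpha>))" by (rule enn2real_mono[OF e]) simp
    also have "\<dots> = K * 2 powr \<alpha> * r powr \<alpha>" using K0 r by (simp add: powr_mult)
    finally show ?thesis .
  qed
  have bdd: "bdd_above S"
    unfolding bdd_above_def S_def
  proof (intro exI[of _ "K * 2 powr \<alpha>"] ballI)
    fix y assume "y \<in> {measure M (cube a l \<inter> ball t r) / r powr \<alpha> | t r. t \<in> cube a l \<and> 0 < r \<and> r < l}"
    then obtain t r where y: "y = measure M (cube a l \<inter> ball t r) / r powr \<alpha>" and r: "0 < r" by blast
    show "y \<le> K * 2 powr \<alpha>" unfolding y using mle[OF r, of t] r by (simp add: divide_le_eq)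
  qed
  have main: "measure M (cube a l \<inter> ball t r) \<le> rho_in M \<alpha> (cube a l) l * r powr \<alpha>"
    if t: "t \<in> cube a l" and r: "0 < r" "r < l" for t r
  proof -
    have "measure M (cube a l \<inter> ball t r) / r powr \<alpha> \<in> S" unfolding S_def using t r by blast
    then have "measure M (cube a l \<inter> ball t r) / r powr \<alpha> \<le> Sup S" by (rule cSup_upper[OF _ bdd])
    then show ?thesis unfolding rho using r by (simp add: divide_le_eq)
  qed
  show "emeasure M (cube a l \<inter> ball t r) \<le> ennreal (rho_in M \<alpha> (cube a l) l * r powr \<alpha>)"
    if t: "t \<in> cube a l" and r: "0 < r" "r < l" for t r
  proof -
    have "emeasure M (cube a l \<inter> ball t r) \<le> emeasure M (cube (t - (\<chi> i. r)) (2*r))"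
      by (rule emeasure_mono) (use ball_sub_cube[of t r] cube_borel[of "t - (\<chi> i. r)" "2*r"] sM in auto)
    also have "\<dots> < \<infinity>"
    proof -
      have "emeasure M (cube (t - (\<chi> i. r)) (2*r)) \<le> ennreal (K * (2 * r) powr \<alpha>)" using K[of "2*r"] r by simp
      then show ?thesis using ennreal_less_top[of "K * (2 * r) powr \<alpha>"] unfolding infinity_ennreal_def by (rule le_less_trans)
    qed
    finally have "emeasure M (cube a l \<inter> ball t r) = ennreal (measure M (cube a l \<inter> ball t r))"
      by (intro emeasure_eq_ennreal_measure) simp
    then show ?thesis using main[OF t r] by (simp add: ennreal_leI)
  qed
  have "a \<in> cube a l" using l by (simp add: cube_def)
  then have "measure M (cube a l \<inter> ball a (l/2)) / (l/2) powr \<alpha> \<in> S" unfolding S_def using l by force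
  then have "measure M (cube a l \<inter> ball a (l/2)) / (l/2) powr \<alpha> \<le> Sup S" by (rule cSup_upper[OF _ bdd])
  moreover have "0 \<le> measure M (cube a l \<inter> ball a (l/2)) / (l/2) powr \<alpha>" by simp
  ultimately show "rho_in M \<alpha> (cube a l) l \<ge> 0" unfolding rho by linarith
qed

definition gridK :: "('n::finite \<Rightarrow> nat) set" where
  "gridK = {k. \<forall>i. k i < CARD('n) + 1}"

lemma gridK_finite: "finite (gridK :: ('n::finite \<Rightarrow> nat) set)"
proof -
  have "(gridK :: ('n \<Rightarrow> nat) set) = PiE UNIV (\<lambda>_. {..<CARD('n)+1})"
    by (auto simp: PiE_UNIV_domain Pi_def gridK_def)
  moreover have "finite (PiE (UNIV::'n set) (\<lambda>_. {..<CARD('n)+1}))" by (rule finite_PiE) auto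
  ultimately show ?thesis by simp
qed

lemma cube_cover:
  fixes a :: "real^'n" and l :: real
  assumes l: "l > 0"
  defines "Mn \<equiv> real (CARD('n) + 1)"
  shows "cube a l \<subseteq> (\<Union>k\<in>gridK. cube a l \<inter> ball (a + (\<chi> i. l / Mn * real (k i))) (real CARD('n) * l / Mn))"
    and "\<And>k. k \<in> gridK \<Longrightarrow> a + (\<chi> i. l / Mn * real (k i)) \<in> cube a l"
proof -
  have Mn: "Mn > 0" "Mn = real CARD('n) + 1" by (auto simp: Mn_def)
  show "a + (\<chi> i. l / Mn * real (k i)) \<in> cube a l" if k: "k \<in> gridK" for k
  proof -
    have "a $ i \<le> a $ i + l / Mn * real (k i) \<and> a $ i + l / Mn * real (k i) < a $ i + l" for i
    proof -
      have "k i < CARD('n) + 1" using k by (simp add: gridK_def)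
      then have "real (k i) < Mn" by (simp add: Mn_def)
      then have "l / Mn * real (k i) < l / Mn * Mn" using l Mn by (intro mult_strict_left_mono) auto
      then show ?thesis using l Mn by simp
    qed
    then show ?thesis by (simp add: cube_def)
  qed
  show "cube a l \<subseteq> (\<Union>k\<in>gridK. cube a l \<inter> ball (a + (\<chi> i. l / Mn * real (k i))) (real CARD('n) * l / Mn))"
  proof
    fix y assume y: "y \<in> cube a l"
    define q where "q i = (y $ i - a $ i) * Mn / l" for i
    define k where "k i = nat \<lfloor>q i\<rfloor>" for i
    have q0: "0 \<le> q i" and qM: "q i < Mn" for i
    proof -
      have "a $ i \<le> y $ i" "y $ i < a $ i + l" using y by (auto simp: cube_def)
      then show "0 \<le> q i" "q i < Mn" using l Mn by (auto simp: q_def divide_simps)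
    qed
    have kq: "real (k i) \<le> q i" "q i < real (k i) + 1" for i
      using q0[of i] by (auto simp: k_def)
    have kK: "k \<in> gridK"
    proof -
      have "k i < CARD('n) + 1" for i
      proof -
        have "real (k i) < Mn" using kq[of i] qM[of i] by linarith
        then show ?thesis by (simp add: Mn_def)
      qed
      then show ?thesis by (simp add: gridK_def)
    qed
    let ?c = "a + (\<chi> i. l / Mn * real (k i))"
    have yq: "y $ i = a $ i + l / Mn * q i" for i using l Mn by (simp add: q_def)
    have comp: "\<bar>y $ i - ?c $ i\<bar> < l / Mn" for i
    proof -
      have "l / Mn * real (k i) \<le> l / Mn * q i" using kq[of i] l Mn by (intro mult_left_mono) auto
      moreover have "l / Mn * q i < l / Mn * (real (k i) + 1)" using kq[of i] l Mn by (intro mult_strict_left_mono) auto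
      ultimately show ?thesis using yq[of i] by (simp add: algebra_simps)
    qed
    have "dist ?c y = norm (y - ?c)" by (simp add: dist_norm norm_minus_commute)
    also have "\<dots> \<le> (\<Sum>i\<in>UNIV. \<bar>(y - ?c) $ i\<bar>)" by (rule norm_le_l1_cart)
    also have "\<dots> < (\<Sum>i\<in>(UNIV::'n set). l / Mn)"
      by (rule sum_strict_mono) (use comp in auto)
    also have "\<dots> = real CARD('n) * l / Mn" by simp
    finally have "y \<in> ball ?c (real CARD('n) * l / Mn)" by simp
    then show "y \<in> (\<Union>k\<in>gridK. cube a l \<inter> ball (a + (\<chi> i. l / Mn * real (k i))) (real CARD('n) * l / Mn))"
      using kK y by blast
  qed
qed

lemma cube_mass:
  fixes M :: "(real^'n) measure"
  assumes rm: "radon_measure M" and pg: "power_growth M \<alpha>" and l: "l > 0" and al: "\<alpha> > 0"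
  shows "emeasure M (cube a l) \<le> ennreal (real (card (gridK :: ('n \<Rightarrow> nat) set)) * rho_in M \<alpha> (cube a l) l * l powr \<alpha>)"
proof -
  define Mn where "Mn = real (CARD('n) + 1)"
  define r0 where "r0 = real CARD('n) * l / Mn"
  define c where "c k = a + (\<chi> i. l / Mn * real (k i))" for k :: "'n \<Rightarrow> nat"
  let ?\<rho> = "rho_in M \<alpha> (cube a l) l"
  have sM: "sets M = sets borel" using sets_M[OF rm] .
  have r0: "0 < r0" "r0 < l" using l by (auto simp: r0_def Mn_def field_simps)
  have cov: "cube a l \<subseteq> (\<Union>k\<in>gridK. cube a l \<inter> ball (c k) r0)"
    using cube_cover(1)[OF l, of a] by (simp add: c_def r0_def Mn_def)
  have cin: "k \<in> gridK \<Longrightarrow> c k \<in> cube a l" for k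
    using cube_cover(2)[OF l, of k a] by (simp add: c_def Mn_def)
  have rho0: "?\<rho> \<ge> 0" using rho_facts(2)[OF rm pg l] .
  have setk: "cube a l \<inter> ball (c k) r0 \<in> sets M" for k
    unfolding sM by (intro sets.Int cube_borel) simp
  have setU: "(\<Union>k\<in>gridK. cube a l \<inter> ball (c k) r0) \<in> sets M"
    by (intro sets.finite_UN gridK_finite setk)
  have "emeasure M (cube a l) \<le> emeasure M (\<Union>k\<in>gridK. cube a l \<inter> ball (c k) r0)"
    by (rule emeasure_mono[OF cov setU])
  also have "\<dots> \<le> (\<Sum>k\<in>gridK. emeasure M (cube a l \<inter> ball (c k) r0))"
    by (rule emeasure_subadditive_finite[OF gridK_finite]) (use setk in blast)
  also have "\<dots> \<le> (\<Sum>k\<in>(gridK :: ('n \<Rightarrow> nat) set). ennreal (?\<rho> * r0 powr \<alpha>))"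
  proof (rule sum_mono)
    fix k :: "'n \<Rightarrow> nat" assume "k \<in> gridK"
    then show "emeasure M (cube a l \<inter> ball (c k) r0) \<le> ennreal (?\<rho> * r0 powr \<alpha>)"
      using rho_facts(1)[OF rm pg l cin r0] by blast
  qed
  also have "\<dots> = ennreal (real (card (gridK :: ('n \<Rightarrow> nat) set)) * (?\<rho> * r0 powr \<alpha>))"
    using rho0 by (simp add: ennreal_mult' ennreal_of_nat_eq_real_of_nat)
  also have "\<dots> \<le> ennreal (real (card (gridK :: ('n \<Rightarrow> nat) set)) * ?\<rho> * l powr \<alpha>)"
  proof (rule ennreal_leI)
    have "r0 powr \<alpha> \<le> l powr \<alpha>" using r0 al by (intro powr_mono2) auto
    then have "?\<rho> * r0 powr \<alpha> \<le> ?\<rho> * l powr \<alpha>" using rho0 by (rule mult_left_mono)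
    then show "real (card (gridK :: ('n \<Rightarrow> nat) set)) * (?\<rho> * r0 powr \<alpha>) \<le> real (card (gridK :: ('n \<Rightarrow> nat) set)) * ?\<rho> * l powr \<alpha>"
      by (simp add: mult_left_mono mult.assoc)
  qed
  finally show ?thesis .
qed

lemma dist_in_cube:
  fixes t x :: "real^'n"
  assumes "t \<in> cube a l" "x \<in> cube a l"
  shows "dist t x \<le> real CARD('n) * l"
proof -
  have "dist t x = norm (t - x)" by (simp add: dist_norm)
  also have "\<dots> \<le> (\<Sum>i\<in>UNIV. \<bar>(t - x) $ i\<bar>)" by (rule norm_le_l1_cart)
  also have "\<dots> \<le> (\<Sum>i\<in>(UNIV::'n set). l)"
  proof (rule sum_mono)
    fix i
    have "a $ i \<le> t $ i" "t $ i < a $ i + l" "a $ i \<le> x $ i" "x $ i < a $ i + l"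
      using assms by (auto simp: cube_def)
    then show "\<bar>(t - x) $ i\<bar> \<le> l" by simp
  qed
  also have "\<dots> = real CARD('n) * l" by simp
  finally show ?thesis .
qed

lemma small_alpha:
  fixes M :: "(real^'n) measure"
  assumes rm: "radon_measure M" and pg: "power_growth M \<alpha>" and l: "l > 0" and al: "\<alpha> > 0" "\<alpha> \<le> 1"
    and x: "x \<in> cube a l"
  shows "(\<integral>\<^sup>+ t \<in> cube a l. ennreal (1 / dist t x powr (\<alpha> - 1)) \<partial>M)
    \<le> ennreal (real CARD('n) powr (1 - \<alpha>) * real (card (gridK :: ('n \<Rightarrow> nat) set)) * l * rho_in M \<alpha> (cube a l) l)"
proof -
  let ?\<rho> = "rho_in M \<alpha> (cube a l) l"
  let ?N = "real (card (gridK :: ('n \<Rightarrow> nat) set))"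
  define c where "c = (real CARD('n) * l) powr (1 - \<alpha>)"
  have sM: "sets M = sets borel" using sets_M[OF rm] .
  have setI: "cube a l \<in> sets M" by (simp add: sM cube_borel)
  have rho0: "?\<rho> \<ge> 0" using rho_facts(2)[OF rm pg l] .
  have pw: "ennreal (1 / dist t x powr (\<alpha> - 1)) * indicator (cube a l) t \<le> ennreal c * indicator (cube a l) t" for t
  proof (cases "t \<in> cube a l")
    case True
    have "1 / dist t x powr (\<alpha> - 1) \<le> c"
    proof (cases "t = x")
      case True then show ?thesis by (simp add: c_def)
    next
      case False
      then have d: "dist t x > 0" by simp
      have "1 / dist t x powr (\<alpha> - 1) = dist t x powr (1 - \<alpha>)"
        using powr_minus_divide[of "dist t x" "\<alpha> - 1"] by simp
      also have "\<dots> \<le> c" unfolding c_def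
        by (rule powr_mono2) (use al d dist_in_cube[OF True x] in auto)
      finally show ?thesis .
    qed
    then show ?thesis using True by (simp add: ennreal_leI)
  qed simp
  have "(\<integral>\<^sup>+ t \<in> cube a l. ennreal (1 / dist t x powr (\<alpha> - 1)) \<partial>M) \<le> (\<integral>\<^sup>+ t. ennreal c * indicator (cube a l) t \<partial>M)"
    by (rule nn_integral_mono) (use pw in auto)
  also have "\<dots> = ennreal c * emeasure M (cube a l)" by (rule nn_integral_cmult_indicator[OF setI])
  also have "\<dots> \<le> ennreal c * ennreal (?N * ?\<rho> * l powr \<alpha>)"
    by (rule mult_left_mono[OF cube_mass[OF rm pg l al(1)]]) simp
  also have "\<dots> = ennreal (c * (?N * ?\<rho> * l powr \<alpha>))"
    by (simp add: ennreal_mult' c_def rho0)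
  also have "c * (?N * ?\<rho> * l powr \<alpha>) = real CARD('n) powr (1 - \<alpha>) * ?N * l * ?\<rho>"
  proof -
    have "l powr (1 - \<alpha>) * l powr \<alpha> = l" using l by (simp add: powr_add[symmetric])
    then show ?thesis unfolding c_def using l by (simp add: powr_mult algebra_simps)
  qed
  finally show ?thesis .
qed

lemma find_k:
  fixes d l :: real
  assumes d: "d > 0" "d < l / 2"
  obtains k :: nat where "l / 2 ^ Suc k / 2 \<le> d" "d < l / 2 ^ Suc k"
proof -
  let ?P = "\<lambda>k::nat. l / 2 ^ Suc k / 2 \<le> d"
  obtain n :: nat where n: "l / d < 2 ^ n" using real_arch_pow[of 2 "l / d"] by auto
  have "l / 2 ^ Suc n / 2 \<le> l / 2 ^ n"
    using d by (simp add: divide_simps)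
  moreover have "l / 2 ^ n < d" using n d by (simp add: divide_simps mult.commute)
  ultimately have Pn: "?P n" by linarith
  define k where "k = (LEAST k. ?P k)"
  have Pk: "?P k" unfolding k_def by (rule LeastI[of ?P n, OF Pn])
  have "d < l / 2 ^ Suc k"
  proof (cases k)
    case 0 then show ?thesis using d by simp
  next
    case (Suc j)
    then have "j < k" by simp
    then have "\<not> ?P j" unfolding k_def by (rule not_less_Least)
    then show ?thesis using Suc by simp
  qed
  then show ?thesis using that Pk by blast
qed

lemma pow_identity:
  fixes s \<beta> :: real
  assumes "s > 0"
  shows "1 / (s / 2) powr \<beta> * s powr (\<beta> + 1) = 2 powr \<beta> * s"
proof -
  have "s powr (\<beta> + 1) = s powr \<beta> * s" using assms by (simp add: powr_add)
  moreover have "(s / 2) powr \<beta> = s powr \<beta> / 2 powr \<beta>" by (rule powr_divide)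
  ultimately show ?thesis using assms by simp
qed

lemma big_alpha:
  fixes M :: "(real^'n) measure"
  assumes rm: "radon_measure M" and pg: "power_growth M \<alpha>" and l: "l > 0" and al: "\<alpha> > 1"
    and x: "x \<in> cube a l"
  shows "(\<integral>\<^sup>+ t \<in> cube a l. ennreal (1 / dist t x powr (\<alpha> - 1)) \<partial>M)
    \<le> ennreal (2 powr (\<alpha> - 1) * (real (card (gridK :: ('n \<Rightarrow> nat) set)) + 1) * l * rho_in M \<alpha> (cube a l) l)"
proof -
  let ?\<rho> = "rho_in M \<alpha> (cube a l) l"
  let ?N = "real (card (gridK :: ('n \<Rightarrow> nat) set))"
  let ?I = "cube a l"
  define \<beta> where "\<beta> = \<alpha> - 1"
  have \<beta>: "\<beta> > 0" "\<alpha> = \<beta> + 1" using al by (auto simp: \<beta>_def)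
  define s where "s k = l / 2 ^ Suc k" for k :: nat
  define c where "c k = 1 / (s k / 2) powr \<beta>" for k
  define A where "A = 1 / (l / 2) powr \<beta>"
  define B where "B k = ?I \<inter> ball x (s k)" for k
  have s: "0 < s k" "s k < l" for k
  proof -
    have "(1::real) < 2 * 2 ^ k" using one_le_power[of "2::real" k] by linarith
    then show "0 < s k" "s k < l" using l by (auto simp: s_def divide_simps)
  qed
  have sM: "sets M = sets borel" using sets_M[OF rm] .
  have setI: "?I \<in> sets M" by (simp add: sM cube_borel)
  have setB: "B k \<in> sets M" for k unfolding B_def sM by (intro sets.Int cube_borel) simp
  have rho0: "?\<rho> \<ge> 0" using rho_facts(2)[OF rm pg l] .
  have A0: "A \<ge> 0" and c0: "c k \<ge> 0" for k by (auto simp: A_def c_def)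
  have pw: "ennreal (1 / dist t x powr (\<alpha> - 1)) * indicator ?I t
      \<le> ennreal A * indicator ?I t + (\<Sum>k. ennreal (c k) * indicator (B k) t)" for t
  proof (cases "t \<in> ?I")
    case tI: True
    show ?thesis
    proof (cases "t = x")
      case True then show ?thesis by simp
    next
      case False
      then have d: "dist t x > 0" by simp
      show ?thesis
      proof (cases "dist t x \<ge> l / 2")
        case True
        have "(l/2) powr \<beta> \<le> dist t x powr \<beta>" using True l \<beta> by (intro powr_mono2) auto
        then have "1 / dist t x powr (\<alpha> - 1) \<le> A" unfolding A_def \<beta>_def[symmetric]
          using l d by (intro divide_left_mono) auto
        then have "ennreal (1 / dist t x powr (\<alpha> - 1)) \<le> ennreal A" by (rule ennreal_leI)
        also have "\<dots> \<le> ennreal A + (\<Sum>k. ennreal (c k) * indicator (B k) t)" by simp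
        finally show ?thesis using tI by simp
      next
        case False
        then obtain k where k: "l / 2 ^ Suc k / 2 \<le> dist t x" "dist t x < l / 2 ^ Suc k"
          using find_k[of "dist t x" l] d by force
        have tB: "t \<in> B k" using k tI by (simp add: B_def s_def dist_commute)
        have "(s k / 2) powr \<beta> \<le> dist t x powr \<beta>" using k s[of k] \<beta> unfolding s_def by (intro powr_mono2) auto
        then have "1 / dist t x powr (\<alpha> - 1) \<le> c k" unfolding c_def \<beta>_def[symmetric]
          using s[of k] d by (intro divide_left_mono) auto
        then have "ennreal (1 / dist t x powr (\<alpha> - 1)) \<le> ennreal (c k) * indicator (B k) t"
          using tB by (simp add: ennreal_leI)
        also have "\<dots> \<le> (\<Sum>k. ennreal (c k) * indicator (B k) t)"
        proof -
          have "(\<Sum>i\<in>{k}. ennreal (c i) * indicator (B i) t) \<le> (\<Sum>k. ennreal (c k) * indicator (B k) t)"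
            by (rule sum_le_suminf[OF summableI]) auto
          then show ?thesis by (simp only: sum.insert_remove finite.emptyI sum.empty empty_Diff add_0_right)
        qed
        also have "\<dots> \<le> ennreal A + (\<Sum>k. ennreal (c k) * indicator (B k) t)" by simp
        finally show ?thesis using tI by simp
      qed
    qed
  qed simp
  have m1: "(\<lambda>t. ennreal A * indicator ?I t) \<in> borel_measurable M"
    by (intro borel_measurable_times_ennreal borel_measurable_const borel_measurable_indicator setI)
  have m2: "(\<lambda>t. ennreal (c k) * indicator (B k) t) \<in> borel_measurable M" for k
    by (intro borel_measurable_times_ennreal borel_measurable_const borel_measurable_indicator setB)
  have m3: "(\<lambda>t. (\<Sum>k. ennreal (c k) * indicator (B k) t)) \<in> borel_measurable M"
    by (rule borel_measurable_suminf_order) (rule m2)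
  have "(\<integral>\<^sup>+ t \<in> ?I. ennreal (1 / dist t x powr (\<alpha> - 1)) \<partial>M)
      \<le> (\<integral>\<^sup>+ t. ennreal A * indicator ?I t + (\<Sum>k. ennreal (c k) * indicator (B k) t) \<partial>M)"
    by (rule nn_integral_mono) (use pw in auto)
  also have "\<dots> = (\<integral>\<^sup>+ t. ennreal A * indicator ?I t \<partial>M) + (\<integral>\<^sup>+ t. (\<Sum>k. ennreal (c k) * indicator (B k) t) \<partial>M)"
    by (rule nn_integral_add[OF m1 m3])
  also have "\<dots> = ennreal A * emeasure M ?I + (\<Sum>k. ennreal (c k) * emeasure M (B k))"
    by (simp add: nn_integral_suminf[OF m2] nn_integral_cmult_indicator[OF setI] nn_integral_cmult_indicator[OF setB])
  also have "\<dots> \<le> ennreal (2 powr \<beta> * ?N * l * ?\<rho>) + ennreal (2 powr \<beta> * l * ?\<rho>)"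
  proof (rule add_mono)
    have "ennreal A * emeasure M ?I \<le> ennreal A * ennreal (?N * ?\<rho> * l powr \<alpha>)"
      by (rule mult_left_mono[OF cube_mass[OF rm pg l]]) (use al in auto)
    also have "\<dots> = ennreal (A * (?N * ?\<rho> * l powr \<alpha>))" by (simp add: ennreal_mult' A0)
    also have "A * (?N * ?\<rho> * l powr \<alpha>) = 2 powr \<beta> * ?N * l * ?\<rho>"
    proof -
      have e: "A * l powr \<alpha> = 2 powr \<beta> * l" using pow_identity[of l \<beta>] l \<beta>(2) by (simp add: A_def)
      have "A * (?N * ?\<rho> * l powr \<alpha>) = (A * l powr \<alpha>) * ?N * ?\<rho>" by (simp add: mult_ac)
      then show ?thesis using e by (simp add: mult_ac)
    qed
    finally show "ennreal A * emeasure M ?I \<le> ennreal (2 powr \<beta> * ?N * l * ?\<rho>)" .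
  next
    have termk: "ennreal (c k) * emeasure M (B k) \<le> ennreal (2 powr \<beta> * l * ?\<rho> * (1/2) ^ Suc k)" for k
    proof -
      have "ennreal (c k) * emeasure M (B k) \<le> ennreal (c k) * ennreal (?\<rho> * s k powr \<alpha>)"
        by (rule mult_left_mono) (use rho_facts(1)[OF rm pg l x s(1)[of k] s(2)[of k]] in \<open>auto simp: B_def\<close>)
      also have "\<dots> = ennreal (c k * (?\<rho> * s k powr \<alpha>))" by (simp add: ennreal_mult' c0)
      also have "c k * (?\<rho> * s k powr \<alpha>) = 2 powr \<beta> * l * ?\<rho> * (1/2) ^ Suc k"
      proof -
        have e: "c k * s k powr \<alpha> = 2 powr \<beta> * s k" using pow_identity[of "s k" \<beta>] s[of k] \<beta>(2) by (simp add: c_def)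
        have "c k * (?\<rho> * s k powr \<alpha>) = (c k * s k powr \<alpha>) * ?\<rho>" by (simp add: mult_ac)
        also have "\<dots> = 2 powr \<beta> * s k * ?\<rho>" using e by simp
        also have "\<dots> = 2 powr \<beta> * l * ?\<rho> * (1/2) ^ Suc k" by (simp add: s_def power_one_over)
        finally show ?thesis .
      qed
      finally show ?thesis .
    qed
    have sums: "(\<lambda>k. 2 powr \<beta> * l * ?\<rho> * (1/2) ^ Suc k) sums (2 powr \<beta> * l * ?\<rho> * 1)"
      by (rule sums_mult[OF power_half_series])
    have "(\<Sum>k. ennreal (c k) * emeasure M (B k)) \<le> (\<Sum>k. ennreal (2 powr \<beta> * l * ?\<rho> * (1/2) ^ Suc k))"
      by (intro suminf_le summableI termk)
    also have "\<dots> = ennreal (\<Sum>k. 2 powr \<beta> * l * ?\<rho> * (1/2) ^ Suc k)"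
      by (rule suminf_ennreal2) (use rho0 l sums_summable[OF sums] in auto)
    also have "\<dots> = ennreal (2 powr \<beta> * l * ?\<rho>)" using sums_unique[OF sums] by simp
    finally show "(\<Sum>k. ennreal (c k) * emeasure M (B k)) \<le> ennreal (2 powr \<beta> * l * ?\<rho>)" .
  qed
  also have "\<dots> = ennreal (2 powr (\<alpha> - 1) * (?N + 1) * l * ?\<rho>)"
    using rho0 l by (simp add: ennreal_plus[symmetric] \<beta>_def algebra_simps del: ennreal_plus)
  finally show ?thesis .
qed


theorem lemma5p1:
  fixes \<alpha> :: real
  assumes "0 < \<alpha>" and "\<alpha> \<le> real CARD('n)"
  shows "\<exists>C>0. \<forall>(M :: (real ^ 'n) measure) (m :: int) (j :: 'n \<Rightarrow> int) (x :: real ^ 'n).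
           radon_measure M \<longrightarrow> power_growth M \<alpha> \<longrightarrow> x \<in> dyadic_cube m j \<longrightarrow>
           (\<integral>\<^sup>+ t \<in> dyadic_cube m j. ennreal (1 / dist t x powr (\<alpha> - 1)) \<partial>M)
             \<le> ennreal (C * 2 powr (- real_of_int m) * rho_in M \<alpha> (dyadic_cube m j) (2 powr (- real_of_int m)))"
proof -
  let ?N = "real (card (gridK :: ('n \<Rightarrow> nat) set))"
  define C where "C = (if \<alpha> \<le> 1 then real CARD('n) powr (1 - \<alpha>) * ?N + 1 else 2 powr (\<alpha> - 1) * (?N + 1))"
  have C0: "C > 0" unfolding C_def by (auto intro: add_nonneg_pos add_pos_nonneg)
  show ?thesis
  proof (intro exI[of _ C] conjI C0 allI impI)
    fix M :: "(real ^ 'n) measure" and m :: int and j :: "'n \<Rightarrow> int" and x :: "real ^ 'n"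
    assume rm: "radon_measure M" and pg: "power_growth M \<alpha>" and xI: "x \<in> dyadic_cube m j"
    define l where "l = (2::real) powr (- real_of_int m)"
    define a where "a = (\<chi> i. real_of_int (j i) * l :: real ^ 'n)"
    have l: "l > 0" by (simp add: l_def)
    have D: "dyadic_cube m j = cube a l" by (simp add: dyadic_cube_def a_def l_def)
    have x: "x \<in> cube a l" using xI D by simp
    let ?\<rho> = "rho_in M \<alpha> (cube a l) l"
    have rho0: "?\<rho> \<ge> 0" using rho_facts(2)[OF rm pg l] .
    have "(\<integral>\<^sup>+ t \<in> cube a l. ennreal (1 / dist t x powr (\<alpha> - 1)) \<partial>M) \<le> ennreal (C * l * ?\<rho>)"
    proof (cases "\<alpha> \<le> 1")
      case True
      have "(\<integral>\<^sup>+ t \<in> cube a l. ennreal (1 / dist t x powr (\<alpha> - 1)) \<partial>M)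
          \<le> ennreal (real CARD('n) powr (1 - \<alpha>) * ?N * l * ?\<rho>)"
        by (rule small_alpha[OF rm pg l assms(1) True x])
      also have "\<dots> \<le> ennreal (C * l * ?\<rho>)"
      proof (rule ennreal_leI)
        have "real CARD('n) powr (1 - \<alpha>) * ?N \<le> C" using True by (simp add: C_def)
        then show "real CARD('n) powr (1 - \<alpha>) * ?N * l * ?\<rho> \<le> C * l * ?\<rho>"
          using l rho0 by (intro mult_right_mono) auto
      qed
      finally show ?thesis .
    next
      case False
      then have "\<alpha> > 1" by simp
      from big_alpha[OF rm pg l this x] show ?thesis using False by (simp add: C_def)
    qed
    then show "(\<integral>\<^sup>+ t \<in> dyadic_cube m j. ennreal (1 / dist t x powr (\<alpha> - 1)) \<partial>M)
             \<le> ennreal (C * 2 powr (- real_of_int m) * rho_in M \<alpha> (dyadic_cube m j) (2 powr (- real_of_int m)))"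
      by (simp add: D l_def[symmetric])
  qed
qed

end
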